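(* For all positive integers $a,b$ and every integer $k$ with $1\le k\le\min(a,b)$, there exist positions of the parallel chip-firing game on $K_{a,b}$ with period exactly $k$ and positions with period exactly $2k$.
   Context: Parallel chip-firing game: a position $\sigma$ assigns a nonnegative integer to each vertex; in each step every vertex $v$ with $\sigma(v)\ge\deg(v)$ simultaneously sends one chip to each neighbor. $K_{a,b}$ is the complete bipartite graph with sides of sizes $a$ and $b$. The period $p(\sigma)$ is the least positive integer $p$ such that $U^{t+p}\sigma=U^t\sigma$ for all sufficiently large $t$, where $U$ is the step operator. *)

theory Defs
  imports Main
begin

definition Kab_vertices :: "nat \<Rightarrow> nat \<Rightarrow> (bool \<times> nat) set" where
  "Kab_vertices a b = {(False, i) | i. i < a} \<union> {(True, j) | j. j < b}"

definition Kab_adj :: "nat \<Rightarrow> nat \<Rightarrow> bool \<times> nat \<Rightarrow> bool \<times> nat \<Rightarrow> bool" where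
  "Kab_adj a b u v \<longleftrightarrow> u \<in> Kab_vertices a b \<and> v \<in> Kab_vertices a b \<and> fst u \<noteq> fst v"

definition Kab_deg :: "nat \<Rightarrow> nat \<Rightarrow> bool \<times> nat \<Rightarrow> nat" where
  "Kab_deg a b v = card {u. Kab_adj a b v u}"

definition is_position :: "nat \<Rightarrow> nat \<Rightarrow> (bool \<times> nat \<Rightarrow> nat) \<Rightarrow> bool" where
  "is_position a b \<sigma> \<longleftrightarrow> (\<forall>v. v \<notin> Kab_vertices a b \<longrightarrow> \<sigma> v = 0)"

definition fires :: "nat \<Rightarrow> nat \<Rightarrow> (bool \<times> nat \<Rightarrow> nat) \<Rightarrow> bool \<times> nat \<Rightarrow> bool" where
  "fires a b \<sigma> v \<longleftrightarrow> v \<in> Kab_vertices a b \<and> \<sigma> v \<ge> Kab_deg a b v"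

definition step :: "nat \<Rightarrow> nat \<Rightarrow> (bool \<times> nat \<Rightarrow> nat) \<Rightarrow> (bool \<times> nat \<Rightarrow> nat)" where
  "step a b \<sigma> = (\<lambda>v. \<sigma> v - (if fires a b \<sigma> v then Kab_deg a b v else 0)
                       + card {u. Kab_adj a b v u \<and> fires a b \<sigma> u})"

definition eventually_periodic_with :: "nat \<Rightarrow> nat \<Rightarrow> (bool \<times> nat \<Rightarrow> nat) \<Rightarrow> nat \<Rightarrow> bool" where
  "eventually_periodic_with a b \<sigma> p \<longleftrightarrow>
     (\<exists>T. \<forall>t\<ge>T. (step a b ^^ (t + p)) \<sigma> = (step a b ^^ t) \<sigma>)"

definition period :: "nat \<Rightarrow> nat \<Rightarrow> (bool \<times> nat \<Rightarrow> nat) \<Rightarrow> nat" where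
  "period a b \<sigma> = (LEAST p. p > 0 \<and> eventually_periodic_with a b \<sigma> p)"

end

theory Submission
  imports Defs
begin

definition Dt :: "nat \<Rightarrow> (bool \<times> nat \<Rightarrow> nat) \<Rightarrow> nat \<Rightarrow> bool \<times> nat \<Rightarrow> nat" where
  "Dt P \<delta> t v = (t + \<delta> v) mod P"

definition sig :: "nat \<Rightarrow> nat \<Rightarrow> nat \<Rightarrow> (bool \<times> nat \<Rightarrow> nat) \<Rightarrow> nat \<Rightarrow> bool \<times> nat \<Rightarrow> nat" where
  "sig a b P \<delta> t v = (if v \<in> Kab_vertices a b then
     (if Dt P \<delta> t v = 0 then card {u. Kab_adj a b v u}
      else card {u. Kab_adj a b v u \<and> 0 < Dt P \<delta> t u \<and> Dt P \<delta> t u \<le> Dt P \<delta> t v}) else 0)"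

lemma fin_V: "finite (Kab_vertices a b)"
proof -
  have "Kab_vertices a b \<subseteq> UNIV \<times> {..<a+b}" unfolding Kab_vertices_def by auto
  moreover have "finite (UNIV \<times> {..<a+b} :: (bool \<times> nat) set)" by simp
  ultimately show ?thesis by (rule finite_subset)
qed

lemma fin_N: "finite {u. Kab_adj a b v u}"
  by (rule finite_subset[OF _ fin_V[of a b]]) (auto simp: Kab_adj_def)

lemma fin_N': "finite {u. Kab_adj a b v u \<and> Q u}"
  by (rule finite_subset[OF _ fin_N[of a b v]]) auto

lemma Dt_less: "P > 0 \<Longrightarrow> Dt P \<delta> t v < P"
  by (simp add: Dt_def)

lemma Dt_Suc: "Dt P \<delta> (Suc t) v = (if Suc (Dt P \<delta> t v) = P then 0 else Suc (Dt P \<delta> t v))"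
  unfolding Dt_def by (simp add: mod_Suc)

lemma fires_sig:
  assumes P: "P > 0"
    and pred: "\<forall>v\<in>Kab_vertices a b. \<exists>u. Kab_adj a b v u \<and> \<delta> u mod P = Suc (\<delta> v) mod P"
  shows "fires a b (sig a b P \<delta> t) v \<longleftrightarrow> v \<in> Kab_vertices a b \<and> Dt P \<delta> t v = 0"
proof (cases "v \<in> Kab_vertices a b")
  case False then show ?thesis by (simp add: fires_def)
next
  case V: True
  show ?thesis
  proof (cases "Dt P \<delta> t v = 0")
    case True then show ?thesis using V by (simp add: fires_def sig_def Kab_deg_def)
  next
    case False
    obtain u where u: "Kab_adj a b v u" "\<delta> u mod P = Suc (\<delta> v) mod P" using pred V by blast
    have "Dt P \<delta> t u = Suc (t + \<delta> v) mod P"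
      unfolding Dt_def by (metis u(2) add_Suc_right mod_add_right_eq)
    hence du: "Dt P \<delta> t u = (if Suc (Dt P \<delta> t v) = P then 0 else Suc (Dt P \<delta> t v))"
      by (simp add: Dt_def mod_Suc)
    have "{u. Kab_adj a b v u \<and> 0 < Dt P \<delta> t u \<and> Dt P \<delta> t u \<le> Dt P \<delta> t v} \<subset> {u. Kab_adj a b v u}"
    proof -
      have "u \<notin> {u. Kab_adj a b v u \<and> 0 < Dt P \<delta> t u \<and> Dt P \<delta> t u \<le> Dt P \<delta> t v}"
        using du by auto
      thus ?thesis using u(1) by blast
    qed
    hence "card {u. Kab_adj a b v u \<and> 0 < Dt P \<delta> t u \<and> Dt P \<delta> t u \<le> Dt P \<delta> t v} < card {u. Kab_adj a b v u}"
      by (rule psubset_card_mono[OF fin_N])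
    then show ?thesis using V False by (simp add: fires_def sig_def Kab_deg_def)
  qed
qed

lemma step_sig:
  assumes P: "P > 0"
    and pred: "\<forall>v\<in>Kab_vertices a b. \<exists>u. Kab_adj a b v u \<and> \<delta> u mod P = Suc (\<delta> v) mod P"
  shows "step a b (sig a b P \<delta> t) = sig a b P \<delta> (Suc t)"
proof
  fix v
  have F: "\<And>u. fires a b (sig a b P \<delta> t) u \<longleftrightarrow> u \<in> Kab_vertices a b \<and> Dt P \<delta> t u = 0"
    using fires_sig[OF P pred] by blast
  have cs: "card {u. Kab_adj a b v u \<and> fires a b (sig a b P \<delta> t) u} = card {u. Kab_adj a b v u \<and> Dt P \<delta> t u = 0}"
    using F by (metis (no_types, lifting) Kab_adj_def)
  show "step a b (sig a b P \<delta> t) v = sig a b P \<delta> (Suc t) v"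
  proof (cases "v \<in> Kab_vertices a b")
    case False
    have e: "{u. Kab_adj a b v u \<and> fires a b (sig a b P \<delta> t) u} = {}" using False by (auto simp: Kab_adj_def)
    show ?thesis unfolding step_def e using False by (simp add: sig_def)
  next
    case V: True
    let ?N = "{u. Kab_adj a b v u}"
    let ?d = "Dt P \<delta> t v"
    have dl: "?d < P" using Dt_less[OF P] .
    have ul: "\<And>u. Dt P \<delta> t u < P" using Dt_less[OF P] .
    show ?thesis
    proof (cases "?d = 0")
      case True
      have st: "step a b (sig a b P \<delta> t) v = card {u. Kab_adj a b v u \<and> Dt P \<delta> t u = 0}"
        using V True cs by (simp add: step_def sig_def fires_def Kab_deg_def)
      show ?thesis
      proof (cases "P = 1")
        case True
        have "\<And>u. Dt P \<delta> t u = 0" "\<And>u. Dt P \<delta> (Suc t) u = 0" using True by (auto simp: Dt_def)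
        then show ?thesis using st V by (simp add: sig_def)
      next
        case False
        have d1: "Dt P \<delta> (Suc t) v = 1" using \<open>?d = 0\<close> False by (simp add: Dt_Suc)
        have "{u. Kab_adj a b v u \<and> 0 < Dt P \<delta> (Suc t) u \<and> Dt P \<delta> (Suc t) u \<le> 1}
              = {u. Kab_adj a b v u \<and> Dt P \<delta> t u = 0}"
          using False ul by (auto simp: Dt_Suc split: if_splits)
        then show ?thesis using st V d1 by (simp add: sig_def)
      qed
    next
      case False
      have st: "step a b (sig a b P \<delta> t) v = card {u. Kab_adj a b v u \<and> 0 < Dt P \<delta> t u \<and> Dt P \<delta> t u \<le> ?d}
           + card {u. Kab_adj a b v u \<and> Dt P \<delta> t u = 0}"
        using V False cs F by (simp add: step_def sig_def)
      also have "\<dots> = card ({u. Kab_adj a b v u \<and> 0 < Dt P \<delta> t u \<and> Dt P \<delta> t u \<le> ?d}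
           \<union> {u. Kab_adj a b v u \<and> Dt P \<delta> t u = 0})"
        by (rule card_Un_disjoint[symmetric]) (auto intro: fin_N')
      also have "({u. Kab_adj a b v u \<and> 0 < Dt P \<delta> t u \<and> Dt P \<delta> t u \<le> ?d}
           \<union> {u. Kab_adj a b v u \<and> Dt P \<delta> t u = 0}) = {u. Kab_adj a b v u \<and> Dt P \<delta> t u \<le> ?d}"
        by auto
      finally have st2: "step a b (sig a b P \<delta> t) v = card {u. Kab_adj a b v u \<and> Dt P \<delta> t u \<le> ?d}" .
      show ?thesis
      proof (cases "Suc ?d = P")
        case True
        have "{u. Kab_adj a b v u \<and> Dt P \<delta> t u \<le> ?d} = ?N" using True ul
          by (auto simp: less_Suc_eq_le[symmetric])
        then show ?thesis using st2 V True by (simp add: sig_def Dt_Suc)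
      next
        case False
        have "{u. Kab_adj a b v u \<and> 0 < Dt P \<delta> (Suc t) u \<and> Dt P \<delta> (Suc t) u \<le> Suc ?d}
              = {u. Kab_adj a b v u \<and> Dt P \<delta> t u \<le> ?d}"
        proof -
          have nn: "\<And>u. Dt P \<delta> t u \<le> ?d \<Longrightarrow> Suc (Dt P \<delta> t u) \<noteq> P" using False dl by linarith
          show ?thesis using False ul nn by (auto simp: Dt_Suc split: if_splits)
        qed
        then show ?thesis using st2 V False by (simp add: sig_def Dt_Suc)
      qed
    qed
  qed
qed

lemma iter_sig:
  assumes P: "P > 0"
    and pred: "\<forall>v\<in>Kab_vertices a b. \<exists>u. Kab_adj a b v u \<and> \<delta> u mod P = Suc (\<delta> v) mod P"
  shows "(step a b ^^ t) (sig a b P \<delta> 0) = sig a b P \<delta> t"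
  by (induction t) (simp_all add: step_sig[OF P pred])

lemma sig_periodic: "sig a b P \<delta> (n * P + t) = sig a b P \<delta> t"
proof -
  have "\<And>v. Dt P \<delta> (n * P + t) v = Dt P \<delta> t v" by (auto simp: Dt_def add.assoc)
  then show ?thesis unfolding sig_def by presburger
qed

lemma period_sig:
  assumes P: "P > 0"
    and pred: "\<forall>v\<in>Kab_vertices a b. \<exists>u. Kab_adj a b v u \<and> \<delta> u mod P = Suc (\<delta> v) mod P"
    and w: "w \<in> Kab_vertices a b" "\<delta> w mod P = 0"
  shows "is_position a b (sig a b P \<delta> 0) \<and> period a b (sig a b P \<delta> 0) = P"
proof
  show "is_position a b (sig a b P \<delta> 0)" by (simp add: is_position_def sig_def)
  have ev: "eventually_periodic_with a b (sig a b P \<delta> 0) P"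
    unfolding eventually_periodic_with_def iter_sig[OF P pred]
    using sig_periodic[of a b P \<delta> 1] by (auto simp: add.commute)
  have nev: "\<not> eventually_periodic_with a b (sig a b P \<delta> 0) p" if p: "0 < p" "p < P" for p
  proof
    assume "eventually_periodic_with a b (sig a b P \<delta> 0) p"
    then obtain T where T: "\<forall>t\<ge>T. sig a b P \<delta> (t + p) = sig a b P \<delta> t"
      unfolding eventually_periodic_with_def iter_sig[OF P pred] by blast
    have "T \<le> T * P" using P by simp
    hence "sig a b P \<delta> (T * P + p) = sig a b P \<delta> (T * P + 0)" using T by simp
    hence e: "sig a b P \<delta> p = sig a b P \<delta> 0" by (simp only: sig_periodic)
    have "Dt P \<delta> 0 w = 0" using w by (simp add: Dt_def)
    moreover have "Dt P \<delta> p w \<noteq> 0" using w p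
      by (simp add: Dt_def mod_add_right_eq[of p "\<delta> w" P, symmetric])
    ultimately show False using e fires_sig[OF P pred, of _ w] w
      by metis
  qed
  show "period a b (sig a b P \<delta> 0) = P"
    unfolding period_def
  proof (rule Least_equality)
    show "0 < P \<and> eventually_periodic_with a b (sig a b P \<delta> 0) P" using P ev by simp
  next
    fix y assume "0 < y \<and> eventually_periodic_with a b (sig a b P \<delta> 0) y"
    then show "P \<le> y" using nev by (meson not_le)
  qed
qed

theorem proposition3p7:
  fixes a b k :: nat
  assumes "a \<ge> 1" and "b \<ge> 1" and "1 \<le> k" and "k \<le> min a b"
  shows "(\<exists>\<sigma>. is_position a b \<sigma> \<and> period a b \<sigma> = k)
       \<and> (\<exists>\<sigma>. is_position a b \<sigma> \<and> period a b \<sigma> = 2 * k)"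
proof
  define \<delta>1 :: "bool \<times> nat \<Rightarrow> nat" where "\<delta>1 v = min (snd v) (k - 1)" for v
  have p1: "\<forall>v\<in>Kab_vertices a b. \<exists>u. Kab_adj a b v u \<and> \<delta>1 u mod k = Suc (\<delta>1 v) mod k"
  proof
    fix v assume v: "v \<in> Kab_vertices a b"
    obtain s i where vi: "v = (s, i)" by fastforce
    define j where "j = Suc (min i (k - 1)) mod k"
    have jk: "j < k" using assms(3) by (simp add: j_def)
    have "Kab_adj a b v (\<not> s, j)" using v vi jk assms(4)
      by (auto simp: Kab_adj_def Kab_vertices_def)
    moreover have "\<delta>1 (\<not> s, j) mod k = Suc (\<delta>1 v) mod k"
      using jk by (simp add: \<delta>1_def vi j_def)
    ultimately show "\<exists>u. Kab_adj a b v u \<and> \<delta>1 u mod k = Suc (\<delta>1 v) mod k" by blast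
  qed
  have w1: "(False, 0) \<in> Kab_vertices a b" using assms by (simp add: Kab_vertices_def)
  show "\<exists>\<sigma>. is_position a b \<sigma> \<and> period a b \<sigma> = k"
    using period_sig[OF _ p1 w1] assms(3) by (auto simp: \<delta>1_def)
next
  define \<delta>2 :: "bool \<times> nat \<Rightarrow> nat" where
    "\<delta>2 v = (if fst v then 2 * min (snd v) (k - 1) + 1 else 2 * min (snd v) (k - 1))" for v
  have p2: "\<forall>v\<in>Kab_vertices a b. \<exists>u. Kab_adj a b v u \<and> \<delta>2 u mod (2*k) = Suc (\<delta>2 v) mod (2*k)"
  proof
    fix v assume v: "v \<in> Kab_vertices a b"
    obtain s i where vi: "v = (s, i)" by fastforce
    define c where "c = min i (k - 1)"
    have ck: "c < k" using assms(3) by (simp add: c_def)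
    show "\<exists>u. Kab_adj a b v u \<and> \<delta>2 u mod (2*k) = Suc (\<delta>2 v) mod (2*k)"
    proof (cases s)
      case False
      have "Kab_adj a b v (True, c)" using v vi ck assms(4) False
        by (auto simp: Kab_adj_def Kab_vertices_def)
      moreover have "\<delta>2 (True, c) mod (2*k) = Suc (\<delta>2 v) mod (2*k)"
        using ck False by (simp add: \<delta>2_def vi c_def)
      ultimately show ?thesis by blast
    next
      case True
      show ?thesis
      proof (cases "c + 1 < k")
        case lt: True
        have "Kab_adj a b v (False, c + 1)" using v vi lt assms(4) True
          by (auto simp: Kab_adj_def Kab_vertices_def)
        moreover have "\<delta>2 (False, c + 1) mod (2*k) = Suc (\<delta>2 v) mod (2*k)"
          using lt True by (simp add: \<delta>2_def vi c_def)
        ultimately show ?thesis by blast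
      next
        case ge: False
        have "Kab_adj a b v (False, 0)" using v vi assms True
          by (auto simp: Kab_adj_def Kab_vertices_def)
        moreover have "\<delta>2 (False, 0) mod (2*k) = Suc (\<delta>2 v) mod (2*k)"
        proof -
          have "c = k - 1" using ge ck by simp
          hence "Suc (\<delta>2 v) = 2 * k" using True assms(3) by (simp add: \<delta>2_def vi c_def)
          thus ?thesis by (simp add: \<delta>2_def)
        qed
        ultimately show ?thesis by blast
      qed
    qed
  qed
  have w2: "(False, 0) \<in> Kab_vertices a b" using assms by (simp add: Kab_vertices_def)
  show "\<exists>\<sigma>. is_position a b \<sigma> \<and> period a b \<sigma> = 2 * k"
    using period_sig[OF _ p2 w2] assms(3) by (auto simp: \<delta>2_def)
qed

end
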